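(* For every integer $n$ with $1\le n\le N$, every integer $j\ge 0$ and all $x,y$ with $x-y\notin\{0,1,\dots,j\}$, $$\mathscr K_{n-1}^{(0,j)}(x,y)=\mathscr A_n^{(j)}(x,y)\,K_n(x)+\mathscr B_n^{(j)}(x,y)\,K_{n-1}(x),$$ where $$\mathscr A_n^{(j)}(x,y)=\frac{j!}{\|K_{n-1}\|^2\,[x-y]_{j+1}}\sum_{k=0}^{j}\frac{\Delta^kK_{n-1}(y)}{k!}[x-y]_k,\qquad \mathscr B_n^{(j)}(x,y)=-\frac{j!}{\|K_{n-1}\|^2\,[x-y]_{j+1}}\sum_{k=0}^{j}\frac{\Delta^kK_{n}(y)}{k!}[x-y]_k .$$
   Context: Fix an integer $N\ge 1$ and $0<p<1$. Notation: $(a)_0=1$, $(a)_k=a(a+1)\cdots(a+k-1)$ (Pochhammer symbol); $[z]_0=1$, $[z]_k=z(z-1)\cdots(z-k+1)$ (falling factorial). For a function $f$, $\Delta f(x)=f(x+1)-f(x)$, $\nabla f(x)=f(x)-f(x-1)$, $\Delta^0$ is the identity and $\Delta^k=\Delta\circ\Delta^{k-1}$; $\Delta_x,\Delta_y$ denote $\Delta$ acting in the indicated variable. For $0\le n\le N$ the monic Kravchuk polynomial is $K_n(x)=p^n(-N)_n\sum_{k=0}^{n}\frac{(-n)_k(-x)_k}{(-N)_k\,k!}p^{-k}$, and $K_{-1}=0$; these are monic of degree $n$ and orthogonal on $\{0,\dots,N\}$ with respect to the binomial weight $w(x)=\binom{N}{x}p^x(1-p)^{N-x}$, with $\|K_n\|^2=\sum_{x=0}^N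 K_n(x)^2w(x)=n!(-N)_np^n(p-1)^n$. For $1\le n\le N+1$ and integers $i,l\ge0$, the differenced reproducing kernel is $\mathscr K_{n-1}^{(i,l)}(x,y)=\sum_{k=0}^{n-1}\frac{\Delta^iK_k(x)\,\Delta^lK_k(y)}{\|K_k\|^2}$ (i.e. $\Delta_x^i\Delta_y^l$ applied to $\sum_{k=0}^{n-1}K_k(x)K_k(y)/\|K_k\|^2$). *)

theory Defs
  imports Complex_Main
begin

definition falling :: "real \<Rightarrow> nat \<Rightarrow> real" where
  "falling z k = (\<Prod>i<k. z - real i)"

definition fdiff :: "(real \<Rightarrow> real) \<Rightarrow> real \<Rightarrow> real" where
  "fdiff f x = f (x + 1) - f x"

definition fdiff_pow :: "nat \<Rightarrow> (real \<Rightarrow> real) \<Rightarrow> real \<Rightarrow> real" where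
  "fdiff_pow k f = (fdiff ^^ k) f"

(* monic Kravchuk polynomial K_n(x); kravchuk N p n with n = -1 is not needed
   since we only use 0 <= n *)
definition kravchuk :: "nat \<Rightarrow> real \<Rightarrow> nat \<Rightarrow> real \<Rightarrow> real" where
  "kravchuk N p n x = p ^ n * pochhammer (- real N) n *
     (\<Sum>k=0..n. pochhammer (- real n) k * pochhammer (- x) k /
                 (pochhammer (- real N) k * fact k) * p powi (- int k))"

definition kweight :: "nat \<Rightarrow> real \<Rightarrow> nat \<Rightarrow> real" where
  "kweight N p x = real (N choose x) * p ^ x * (1 - p) ^ (N - x)"

definition knorm2 :: "nat \<Rightarrow> real \<Rightarrow> nat \<Rightarrow> real" where
  "knorm2 N p n = (\<Sum>x=0..N. (kravchuk N p n (real x))^2 * kweight N p x)"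

(* differenced reproducing kernel K_{n-1}^{(i,l)}(x,y) *)
definition kkernel :: "nat \<Rightarrow> real \<Rightarrow> nat \<Rightarrow> nat \<Rightarrow> nat \<Rightarrow> real \<Rightarrow> real \<Rightarrow> real" where
  "kkernel N p n i l x y = (\<Sum>k<n. fdiff_pow i (kravchuk N p k) x *
                                  fdiff_pow l (kravchuk N p k) y / knorm2 N p k)"

definition kA :: "nat \<Rightarrow> real \<Rightarrow> nat \<Rightarrow> nat \<Rightarrow> real \<Rightarrow> real \<Rightarrow> real" where
  "kA N p n j x y = fact j / (knorm2 N p (n - 1) * falling (x - y) (j + 1)) *
     (\<Sum>k=0..j. fdiff_pow k (kravchuk N p (n - 1)) y / fact k * falling (x - y) k)"

definition kB :: "nat \<Rightarrow> real \<Rightarrow> nat \<Rightarrow> nat \<Rightarrow> real \<Rightarrow> real \<Rightarrow> real" where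
  "kB N p n j x y = - (fact j / (knorm2 N p (n - 1) * falling (x - y) (j + 1)) *
     (\<Sum>k=0..j. fdiff_pow k (kravchuk N p n) y / fact k * falling (x - y) k))"

end

theory Submission
  imports Defs "HOL-Computational_Algebra.Polynomial"
begin


lemma falling_0[simp]: "falling z 0 = 1" by (simp add: falling_def)
lemma falling_Suc: "falling z (Suc k) = falling z k * (z - real k)"
  by (simp add: falling_def)
lemma falling_Suc_shift: "falling z (Suc k) = z * falling (z - 1) k"
  unfolding falling_def prod.lessThan_Suc_shift by (simp add: algebra_simps)

lemma fdiff_pow_0[simp]: "fdiff_pow 0 f = f" by (simp add: fdiff_pow_def)
lemma fdiff_pow_Suc: "fdiff_pow (Suc k) f y = fdiff_pow k f (y+1) - fdiff_pow k f y"
  by (simp add: fdiff_pow_def fdiff_def)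

lemma fdiff_pow_local:
  assumes "\<forall>i\<le>j. f (y + real i) = g (y + real i)"
  shows "fdiff_pow j f y = fdiff_pow j g y"
  using assms
proof (induction j arbitrary: y)
  case 0 then show ?case by (metis add_0_right fdiff_pow_0 of_nat_0 order_refl)
next
  case (Suc j)
  have a: "fdiff_pow j f y = fdiff_pow j g y" using Suc by auto
  have b: "fdiff_pow j f (y+1) = fdiff_pow j g (y+1)"
  proof -
    have "\<forall>i\<le>j. f (y + 1 + real i) = g (y + 1 + real i)"
    proof (intro allI impI)
      fix i assume "i \<le> j"
      then have "Suc i \<le> Suc j" by simp
      then show "f (y + 1 + real i) = g (y + 1 + real i)"
        using Suc.prems by (metis add.assoc add.commute of_nat_Suc)
    qed
    then show ?thesis using Suc.IH by blast
  qed
  show ?case by (simp add: fdiff_pow_Suc a b)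
qed

lemma fdiff_pow_lin:
  "fdiff_pow j (\<lambda>t. \<Sum>k\<in>A. c k * f k t) = (\<lambda>t. \<Sum>k\<in>A. c k * fdiff_pow j (f k) t)"
proof (induction j)
  case 0 then show ?case by simp
next
  case (Suc j)
  show ?case
    by (rule ext) (simp add: fdiff_pow_Suc Suc algebra_simps sum_subtractf[symmetric])
qed

lemma sum_identity:
  fixes d :: "nat \<Rightarrow> real"
  shows "u * (\<Sum>k\<le>j. (d k + d (Suc k)) / fact k * falling (u-1) k)
        - (u - real (Suc j)) * (\<Sum>k\<le>j. d k / fact k * falling u k)
        = real (Suc j) * (\<Sum>k\<le>Suc j. d k / fact k * falling u k)"
proof (induction j)
  case 0
  then show ?case by (simp add: falling_Suc_shift algebra_simps)
next
  case (Suc j)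
  have e1: "u * falling (u-1) (Suc j) = falling u (Suc (Suc j))"
    by (simp add: falling_Suc_shift)
  have e2: "falling u (Suc (Suc j)) = falling u (Suc j) * (u - real (Suc j))"
    by (simp add: falling_Suc)
  have f: "fact (Suc (Suc j)) = real (Suc (Suc j)) * fact (Suc j)" by simp
  have fnz: "(fact (Suc j)::real) \<noteq> 0" by simp
  let ?S = "\<Sum>k\<le>j. d k / fact k * falling u k"
  let ?T = "\<Sum>k\<le>j. (d k + d (Suc k)) / fact k * falling (u-1) k"
  have L: "u * (?T + (d (Suc j) + d (Suc (Suc j))) / fact (Suc j) * falling (u-1) (Suc j))
        - (u - real (Suc (Suc j))) * (?S + d (Suc j) / fact (Suc j) * falling u (Suc j))
        = (u * ?T - (u - real (Suc j)) * ?S) + ?S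
          + (d (Suc j) + d (Suc (Suc j))) / fact (Suc j) * falling u (Suc (Suc j))
          - (u - real (Suc (Suc j))) * (d (Suc j) / fact (Suc j) * falling u (Suc j))"
    unfolding e1[symmetric] by (simp add: algebra_simps)
  have key: "\<And>S a b P F m. F \<noteq> 0 \<Longrightarrow> 1 + m \<noteq> 0 \<Longrightarrow>
     m*(S + a/F*P) + S + (a+b)/F*(P*(u-m)) - (u-(1+m))*(a/F*P)
     = (1+m)*(S + a/F*P + b/((1+m)*F)*(P*(u-m)))"
  proof -
    fix S a b P F m :: real
    assume F: "F \<noteq> 0" and m: "1 + m \<noteq> 0"
    have "(1+m)*(S + a/F*P + b/((1+m)*F)*(P*(u-m))) = (1+m)*(S + a/F*P) + (1+m)*(b/((1+m)*F)*(P*(u-m)))"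
      by (rule distrib_left)
    also have "(1+m)*(b/((1+m)*F)*(P*(u-m))) = b/F*(P*(u-m))" using m by simp
    also have "(1+m)*(S + a/F*P) + b/F*(P*(u-m)) = m*(S + a/F*P) + S + (a+b)/F*(P*(u-m)) - (u-(1+m))*(a/F*P)"
      using F by (simp add: field_simps)
    finally show "m*(S + a/F*P) + S + (a+b)/F*(P*(u-m)) - (u-(1+m))*(a/F*P)
     = (1+m)*(S + a/F*P + b/((1+m)*F)*(P*(u-m)))" by simp
  qed
  show ?case
    apply (simp only: sum.atMost_Suc L Suc.IH)
    apply (simp only: e2 f of_nat_Suc[of "Suc j"])
    apply (rule key)
    using fnz by simp_all
qed



lemma falling_nz: "(\<forall>i<k. z \<noteq> real i) \<Longrightarrow> falling z k \<noteq> 0"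
  by (simp add: falling_def)

lemma fdiff_pow_shift: "fdiff_pow k g (y+1) = fdiff_pow k g y + fdiff_pow (Suc k) g y"
  by (simp add: fdiff_pow_Suc)

lemma fdiff_pow_quot:
  assumes "\<forall>i\<le>j. x - y \<noteq> real i"
  shows "fdiff_pow j (\<lambda>t. g t / (x - t)) y
     = fact j / falling (x-y) (Suc j) * (\<Sum>k\<le>j. fdiff_pow k g y / fact k * falling (x-y) k)"
  using assms
proof (induction j arbitrary: y)
  case 0
  then show ?case by (simp add: falling_Suc)
next
  case (Suc j)
  define u where "u = x - y"
  define d where "d k = fdiff_pow k g y" for k
  have h1: "\<forall>i\<le>j. x - (y+1) \<noteq> real i"
  proof (intro allI impI)
    fix i assume "i \<le> j"
    then have "Suc i \<le> Suc j" by simp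
    then have "x - y \<noteq> real (Suc i)" using Suc.prems by blast
    then show "x - (y+1) \<noteq> real i" by simp
  qed
  have h2: "\<forall>i\<le>j. x - y \<noteq> real i" using Suc.prems by simp
  have u0: "u \<noteq> 0" using Suc.prems u_def by (metis le0 of_nat_0)
  have uj: "u - real (Suc j) \<noteq> 0" using Suc.prems u_def by auto
  have xy1: "x - (y+1) = u - 1" by (simp add: u_def)
  define A where "A = falling (u-1) (Suc j)"
  define B where "B = falling u (Suc j)"
  define C where "C = falling u (Suc (Suc j))"
  have CA: "C = u * A" by (simp add: A_def C_def falling_Suc_shift)
  have CB: "C = B * (u - real (Suc j))" by (simp add: B_def C_def falling_Suc)
  have Cnz: "C \<noteq> 0" unfolding C_def u_def
    by (rule falling_nz) (use Suc.prems in auto)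
  have Anz: "A \<noteq> 0" using Cnz CA by auto
  have Bnz: "B \<noteq> 0" using Cnz CB by auto
  define T' where "T' = (\<Sum>k\<le>j. (d k + d (Suc k)) / fact k * falling (u-1) k)"
  define T where "T = (\<Sum>k\<le>j. d k / fact k * falling u k)"
  define T2 where "T2 = (\<Sum>k\<le>Suc j. d k / fact k * falling u k)"
  have id: "u * T' - (u - real (Suc j)) * T = real (Suc j) * T2"
    unfolding T'_def T_def T2_def by (rule sum_identity)
  have IH1: "fdiff_pow j (\<lambda>t. g t / (x - t)) (y+1) = fact j / A * T'"
    using Suc.IH[OF h1] unfolding xy1 A_def T'_def d_def
    by (simp add: fdiff_pow_shift)
  have IH2: "fdiff_pow j (\<lambda>t. g t / (x - t)) y = fact j / B * T"
    using Suc.IH[OF h2] unfolding B_def T_def d_def u_def by simp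
  have e1: "fact j / A * T' = fact j * (u * T') / C" using CA u0 Anz by (simp add: field_simps)
  have e2: "fact j / B * T = fact j * ((u - real (Suc j)) * T) / C"
  proof -
    have "fact j * ((u - real (Suc j)) * T) / (B * (u - real (Suc j))) = fact j / B * T"
      using uj by simp
    then show ?thesis using CB by simp
  qed
  have "fdiff_pow (Suc j) (\<lambda>t. g t / (x - t)) y = fact j / A * T' - fact j / B * T"
    by (simp add: fdiff_pow_Suc IH1 IH2)
  also have "\<dots> = fact j * (u * T') / C - fact j * ((u - real (Suc j)) * T) / C"
    by (simp only: e1 e2)
  also have "\<dots> = fact j * (u * T' - (u - real (Suc j)) * T) / C"
    by (simp only: right_diff_distrib diff_divide_distrib)
  also have "\<dots> = fact (Suc j) / C * T2" unfolding id by (simp add: Cnz field_simps)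
  finally show ?case unfolding C_def T2_def d_def u_def .
qed



definition LP :: "(nat \<Rightarrow> real) \<Rightarrow> nat \<Rightarrow> real poly" where
  "LP s k = (\<Prod>i<k. [:s i, -1:])"

lemma poly_LP: "poly (LP s k) x = (\<Prod>i<k. s i - x)"
  by (simp add: LP_def poly_prod)

lemma LP_deg: "degree (LP s k) = k \<and> coeff (LP s k) k = (-1)^k"
proof (induction k)
  case 0 then show ?case by (simp add: LP_def)
next
  case (Suc k)
  have e: "LP s (Suc k) = LP s k * [:s k, -1:]" by (simp add: LP_def)
  have nz: "LP s k \<noteq> 0"
  proof
    assume "LP s k = 0"
    then have "coeff (LP s k) k = 0" by simp
    with Suc show False by simp
  qed
  have nz2: "[:s k, -1:] \<noteq> 0" by simp
  have d: "degree (LP s (Suc k)) = Suc k" unfolding e using degree_mult_eq[OF nz nz2] Suc by simp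
  have "coeff (LP s (Suc k)) (Suc k) = coeff (LP s k) (degree (LP s k)) * coeff [:s k, -1:] (degree [:s k, -1:])"
    unfolding e using coeff_mult_degree_sum[of "LP s k" "[:s k, -1:]"] Suc by simp
  then show ?case using d Suc by simp
qed

lemma falling_pochhammer: "falling z m = (-1)^m * pochhammer (-z) m"
proof -
  have "falling z m = (\<Prod>i<m. (-1::real) * (-z + real i))" unfolding falling_def by (intro prod.cong) auto
  also have "\<dots> = (\<Prod>i<m. (-1::real)) * (\<Prod>i<m. -z + real i)" by (rule prod.distrib)
  also have "\<dots> = (-1)^m * pochhammer (-z) m"
    by (simp add: pochhammer_prod atLeast0LessThan)
  finally show ?thesis .
qed

lemma pochhammer_neg_nat: "pochhammer (- real x) k = (-1)^k * fact k * real (x choose k)"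
proof -
  have "real (x choose k) = (-1)^k * pochhammer (- real x) k / fact k"
    by (simp add: binomial_gbinomial gbinomial_pochhammer)
  then have "fact k * real (x choose k) = (-1)^k * pochhammer (- real x) k" by simp
  then have "(-1)^k * (fact k * real (x choose k)) = ((-1)^k * (-1)^k) * pochhammer (- real x) k"
    by (simp only: mult.assoc)
  then show ?thesis by simp
qed

lemma falling_nat: "falling (real r) m = fact m * real (r choose m)"
  by (simp add: falling_pochhammer pochhammer_neg_nat)

definition Kp :: "nat \<Rightarrow> real \<Rightarrow> nat \<Rightarrow> real poly" where
  "Kp N p n = smult (p ^ n * pochhammer (- real N) n)
     (\<Sum>k=0..n. smult (pochhammer (- real n) k / (pochhammer (- real N) k * fact k) * p powi (- int k))
          (LP real k))"

lemma poly_Kp: "poly (Kp N p n) x = kravchuk N p n x"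
proof -
  have "\<And>k. poly (LP real k) x = pochhammer (-x) k"
    by (simp add: poly_LP pochhammer_prod atLeast0LessThan)
  then show ?thesis
    unfolding Kp_def kravchuk_def by (simp add: poly_sum mult_ac)
qed

lemma Kp_deg:
  assumes "n \<le> N" "p \<noteq> 0"
  shows "degree (Kp N p n) = n \<and> coeff (Kp N p n) n = 1"
proof -
  define c where "c k = pochhammer (- real n) k / (pochhammer (- real N) k * fact k) * p powi (- int k)" for k
  have PN: "pochhammer (- real N) n \<noteq> 0"
    using assms(1) by (auto simp: pochhammer_eq_0_iff)
  have Kdef: "Kp N p n = smult (p ^ n * pochhammer (- real N) n) (\<Sum>k=0..n. smult (c k) (LP real k))"
    by (simp add: Kp_def c_def)
  have dle: "degree (Kp N p n) \<le> n"
    unfolding Kdef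
    by (rule order.trans[OF degree_smult_le], rule degree_sum_le)
       (auto intro: order.trans[OF degree_smult_le] simp: LP_deg)
  have cs: "coeff (\<Sum>k=0..n. smult (c k) (LP real k)) n = c n * (-1)^n"
  proof -
    have "coeff (\<Sum>k=0..n. smult (c k) (LP real k)) n = (\<Sum>k=0..n. c k * coeff (LP real k) n)"
      by (simp add: coeff_sum)
    also have "\<dots> = (\<Sum>k\<in>{n}. c k * coeff (LP real k) n)"
    proof (rule sum.mono_neutral_right)
      show "\<forall>i\<in>{0..n} - {n}. c i * coeff (LP real i) n = 0"
        by (auto intro!: coeff_eq_0 simp: LP_deg)
    qed auto
    finally show ?thesis by (simp add: LP_deg)
  qed
  have pn: "pochhammer (- real n) n = (-1)^n * fact n"
    by (simp add: pochhammer_minus pochhammer_fact)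
  have "coeff (Kp N p n) n = p ^ n * pochhammer (- real N) n * (c n * (-1)^n)"
    unfolding Kdef by (simp add: cs)
  also have "\<dots> = 1"
    using PN assms(2) by (simp add: c_def pn power_int_minus field_simps)
  finally have c1: "coeff (Kp N p n) n = 1" .
  then have "n \<le> degree (Kp N p n)" by (intro le_degree) simp
  then show ?thesis using dle c1 by simp
qed

lemma L1:
  fixes a b :: real
  shows "(\<Sum>x=0..N. real (N choose x) * real (x choose k) * a^x * b^(N-x))
       = real (N choose k) * a^k * (a+b)^(N-k)"
proof (cases "k \<le> N")
  case False
  then show ?thesis by (subst sum.neutral) (auto simp: binomial_eq_0)
next
  case True
  have "(\<Sum>x=0..N. real (N choose x) * real (x choose k) * a^x * b^(N-x))
      = (\<Sum>x=k..N. real (N choose x) * real (x choose k) * a^x * b^(N-x))"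
    by (rule sum.mono_neutral_right) auto
  also have "\<dots> = (\<Sum>y=0..N-k. real (N choose (y+k)) * real ((y+k) choose k) * a^(y+k) * b^(N-(y+k)))"
    using sum.shift_bounds_cl_nat_ivl[of "\<lambda>x. real (N choose x) * real (x choose k) * a^x * b^(N-x)" 0 k "N-k"] True
    by simp
  also have "\<dots> = (\<Sum>y=0..N-k. real (N choose k) * a^k * (real ((N-k) choose y) * a^y * b^((N-k)-y)))"
  proof (rule sum.cong)
    fix y assume "y \<in> {0..N-k}"
    then have y: "y + k \<le> N" using True by auto
    have "(N choose (y+k)) * ((y+k) choose k) = (N choose k) * ((N-k) choose y)"
      using choose_mult[of k "y+k" N] y by simp
    then have "real (N choose (y+k)) * real ((y+k) choose k) = real (N choose k) * real ((N-k) choose y)"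
      by (metis of_nat_mult)
    moreover have "N - (y+k) = (N-k) - y" by simp
    ultimately show "real (N choose (y+k)) * real ((y+k) choose k) * a^(y+k) * b^(N-(y+k))
       = real (N choose k) * a^k * (real ((N-k) choose y) * a^y * b^((N-k)-y))"
      by (simp add: power_add mult_ac)
  qed simp
  also have "\<dots> = real (N choose k) * a^k * (a+b)^(N-k)"
    by (simp add: sum_distrib_left[symmetric] binomial_ring atLeast0AtMost)
  finally show ?thesis .
qed

lemma moment:
  fixes p q :: real
  assumes "p + q = 1"
  shows "(\<Sum>x=0..N. real (N choose x) * real (x choose k) * real ((N-x) choose m) * p^x * q^(N-x))
       = real (N choose k) * real ((N-k) choose m) * p^k * q^m"
proof (cases "k \<le> N")
  case False
  then show ?thesis by (subst sum.neutral) (auto simp: binomial_eq_0)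
next
  case True
  define A where "A = N - k"
  have "(\<Sum>x=0..N. real (N choose x) * real (x choose k) * real ((N-x) choose m) * p^x * q^(N-x))
      = (\<Sum>x=k..N. real (N choose x) * real (x choose k) * real ((N-x) choose m) * p^x * q^(N-x))"
    by (rule sum.mono_neutral_right) auto
  also have "\<dots> = (\<Sum>y=0..N-k. real (N choose (y+k)) * real ((y+k) choose k) * real ((N-(y+k)) choose m) * p^(y+k) * q^(N-(y+k)))"
    using sum.shift_bounds_cl_nat_ivl[of "\<lambda>x. real (N choose x) * real (x choose k) * real ((N-x) choose m) * p^x * q^(N-x)" 0 k "N-k"] True
    by simp
  also have "\<dots> = (\<Sum>y=0..A. real (N choose k) * p^k * (real (A choose y) * real ((A-y) choose m) * p^y * q^(A-y)))"
  proof (rule sum.cong)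
    fix y assume "y \<in> {0..A}"
    then have y: "y + k \<le> N" using True by (auto simp: A_def)
    have "(N choose (y+k)) * ((y+k) choose k) = (N choose k) * ((N-k) choose y)"
      using choose_mult[of k "y+k" N] y by simp
    then have "real (N choose (y+k)) * real ((y+k) choose k) = real (N choose k) * real ((N-k) choose y)"
      by (metis of_nat_mult)
    moreover have "N - (y+k) = A - y" by (simp add: A_def)
    ultimately show "real (N choose (y+k)) * real ((y+k) choose k) * real ((N-(y+k)) choose m) * p^(y+k) * q^(N-(y+k))
       = real (N choose k) * p^k * (real (A choose y) * real ((A-y) choose m) * p^y * q^(A-y))"
      by (simp add: power_add mult_ac A_def)
  qed (simp add: A_def)
  also have "\<dots> = real (N choose k) * p^k * (\<Sum>y=0..A. real (A choose y) * real ((A-y) choose m) * p^y * q^(A-y))"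
    by (simp add: sum_distrib_left)
  also have "(\<Sum>y=0..A. real (A choose y) * real ((A-y) choose m) * p^y * q^(A-y))
      = (\<Sum>z=0..A. real (A choose z) * real (z choose m) * q^z * p^(A-z))"
  proof -
    have "(\<Sum>y=0..A. real (A choose y) * real ((A-y) choose m) * p^y * q^(A-y))
       = (\<Sum>z=0..A. real (A choose (A-z)) * real ((A-(A-z)) choose m) * p^(A-z) * q^(A-(A-z)))"
      using sum.atLeastAtMost_rev[of "\<lambda>y. real (A choose y) * real ((A-y) choose m) * p^y * q^(A-y)" 0 A]
      by simp
    also have "\<dots> = (\<Sum>z=0..A. real (A choose z) * real (z choose m) * q^z * p^(A-z))"
    proof (rule sum.cong)
      fix z assume "z \<in> {0..A}"
      then have z: "z \<le> A" by simp
      then have "A choose (A-z) = A choose z" using binomial_symmetric[of z A] by simp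
      moreover have "A - (A - z) = z" using z by simp
      ultimately show "real (A choose (A-z)) * real ((A-(A-z)) choose m) * p^(A-z) * q^(A-(A-z))
          = real (A choose z) * real (z choose m) * q^z * p^(A-z)" by simp
    qed simp
    finally show ?thesis .
  qed
  also have "\<dots> = real (A choose m) * q^m * (q+p)^(A-m)" by (rule L1)
  finally show ?thesis using assms by (simp add: A_def add.commute)
qed

lemma alt_pascal_g:
  fixes g :: "nat \<Rightarrow> real"
  shows "(\<Sum>k=0..Suc n. real (Suc n choose k) * g k) = (\<Sum>k=0..n. real (n choose k) * (g k + g (Suc k)))"
proof -
  have a: "(\<Sum>k=0..Suc n. real (Suc n choose k) * g k) = g 0 + (\<Sum>k=0..n. real (Suc n choose Suc k) * g (Suc k))"
    by (subst sum.atLeast0_atMost_Suc_shift) simp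
  have b: "(\<Sum>k=0..n. real (Suc n choose Suc k) * g (Suc k))
      = (\<Sum>k=0..n. real (n choose k) * g (Suc k)) + (\<Sum>k=0..n. real (n choose Suc k) * g (Suc k))"
    by (simp add: sum.distrib[symmetric] algebra_simps)
  have c1: "(\<Sum>k=0..Suc n. real (n choose k) * g k) = g 0 + (\<Sum>k=0..n. real (n choose Suc k) * g (Suc k))"
    by (subst sum.atLeast0_atMost_Suc_shift) simp
  have c2: "(\<Sum>k=0..Suc n. real (n choose k) * g k) = (\<Sum>k=0..n. real (n choose k) * g k)"
    by simp
  show ?thesis using a b c1 c2 by (simp add: sum.distrib algebra_simps)
qed

lemma alt_pascal:
  fixes f :: "nat \<Rightarrow> real"
  shows "(\<Sum>k=0..Suc n. (-1)^k * real (Suc n choose k) * f k)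
       = (\<Sum>k=0..n. (-1)^k * real (n choose k) * (f k - f (Suc k)))"
  using alt_pascal_g[of n "\<lambda>k. (-1)^k * f k"] by (simp add: algebra_simps)

lemma alt_zero:
  "m < n \<Longrightarrow> (\<Sum>k=0..n. (-1)^k * real (n choose k) * falling (a - real k) m) = 0"
proof (induction n arbitrary: m a)
  case 0 then show ?case by simp
next
  case (Suc n)
  show ?case
  proof (cases m)
    case 0
    then show ?thesis using choose_alternating_sum[of "Suc n", where 'a=real]
      by (simp add: atLeast0AtMost)
  next
    case (Suc m')
    have d: "falling (a - real k) m - falling (a - real (Suc k)) m = real m * falling ((a - 1) - real k) m'" for k
    proof -
      have e1: "falling (a - real k) (Suc m') = (a - real k) * falling (a - real k - 1) m'"
        by (rule falling_Suc_shift)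
      have e: "a - real (Suc k) = a - real k - 1" "(a - 1) - real k = a - real k - 1" by simp_all
      have e2: "falling (a - real k - 1) (Suc m') = falling (a - real k - 1) m' * (a - real k - 1 - real m')"
        by (rule falling_Suc)
      show ?thesis unfolding Suc e e1 e2 by (simp add: algebra_simps)
    qed
    have "m' < n" using Suc Suc.prems by simp
    then show ?thesis unfolding alt_pascal d
      using Suc.IH[of m' "a-1"] by (simp add: sum_distrib_left[symmetric] mult_ac)
  qed
qed



definition ip :: "nat \<Rightarrow> real \<Rightarrow> (real \<Rightarrow> real) \<Rightarrow> (real \<Rightarrow> real) \<Rightarrow> real" where
  "ip N p f g = (\<Sum>x=0..N. f (real x) * g (real x) * kweight N p x)"

lemma falling_diff_nat: "x \<le> N \<Longrightarrow> falling (real N - real x) m = fact m * real ((N-x) choose m)"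
proof -
  assume "x \<le> N"
  then have e: "real N - real x = real (N - x)" by (simp add: of_nat_diff)
  show ?thesis unfolding e by (rule falling_nat)
qed

lemma canc: "(s::real) \<noteq> 0 \<Longrightarrow> a * (s * X) / (s * Y * f) * w = a / (Y * f) * w * X"
proof -
  assume s: "s \<noteq> 0"
  have "a * (s * X) / (s * Y * f) = (s * (a*X)) / (s * (Y*f))" by (simp add: mult_ac)
  also have "\<dots> = (a*X)/(Y*f)" using s by (rule mult_divide_mult_cancel_left)
  finally show ?thesis by simp
qed

lemma orth_falling:
  assumes "m < n" "n \<le> N" "0 < p"
  shows "ip N p (kravchuk N p n) (\<lambda>x. falling (real N - x) m) = 0"
proof -
  define P where "P = pochhammer (- real N) n"
  define c where "c k = pochhammer (- real n) k / (real (N choose k) * fact k) * p powi (- int k)" for k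
  define a where "a = p^n * P * fact m"
  have kx: "kravchuk N p n (real x) = p^n * P * (\<Sum>k=0..n. c k * real (x choose k))" if "x \<le> N" for x
  proof -
    have "(\<Sum>k=0..n. pochhammer (- real n) k * pochhammer (- real x) k / (pochhammer (- real N) k * fact k) * p powi - int k)
        = (\<Sum>k=0..n. c k * real (x choose k))"
    proof (rule sum.cong)
      fix k assume "k \<in> {0..n}"
      show "pochhammer (- real n) k * pochhammer (- real x) k / (pochhammer (- real N) k * fact k) * p powi - int k
          = c k * real (x choose k)"
        unfolding c_def pochhammer_neg_nat[of x] pochhammer_neg_nat[of N]
        by (rule canc) simp
    qed simp
    then show ?thesis unfolding kravchuk_def P_def by simp
  qed
  have "ip N p (kravchuk N p n) (\<lambda>x. falling (real N - x) m)
     = (\<Sum>x=0..N. (p^n * P * (\<Sum>k=0..n. c k * real (x choose k))) * (fact m * real ((N-x) choose m))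
             * (real (N choose x) * p^x * (1-p)^(N-x)))"
    unfolding ip_def kweight_def by (rule sum.cong) (simp_all add: kx falling_diff_nat)
  also have "\<dots> = (\<Sum>x=0..N. \<Sum>k=0..n. a * c k *
       (real (N choose x) * real (x choose k) * real ((N-x) choose m) * p^x * (1-p)^(N-x)))"
    by (rule sum.cong) (simp_all add: a_def sum_distrib_left sum_distrib_right mult_ac)
  also have "\<dots> = (\<Sum>k=0..n. \<Sum>x=0..N. a * c k *
       (real (N choose x) * real (x choose k) * real ((N-x) choose m) * p^x * (1-p)^(N-x)))"
    by (rule sum.swap)
  also have "\<dots> = (\<Sum>k=0..n. a * c k * (\<Sum>x=0..N.
       (real (N choose x) * real (x choose k) * real ((N-x) choose m) * p^x * (1-p)^(N-x))))"
    by (simp only: sum_distrib_left)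
  also have "\<dots> = (\<Sum>k=0..n. a * c k * (real (N choose k) * real ((N-k) choose m) * p^k * (1-p)^m))"
  proof -
    have mom: "\<And>k. (\<Sum>x=0..N. (real (N choose x) * real (x choose k) * real ((N-x) choose m) * p^x * (1-p)^(N-x)))
       = real (N choose k) * real ((N-k) choose m) * p^k * (1-p)^m"
      by (rule moment) simp
    show ?thesis by (simp only: mom)
  qed
  also have "\<dots> = (\<Sum>k=0..n. (p^n * P * (1-p)^m) * ((-1)^k * real (n choose k) * falling (real N - real k) m))"
  proof (rule sum.cong)
    fix k assume "k \<in> {0..n}"
    then have k: "k \<le> N" using assms by auto
    have CN: "real (N choose k) \<noteq> 0" using k by simp
    have pp: "p powi (- int k) * p^k = 1" using assms(3) by (simp add: power_int_minus)
    have ck: "c k * real (N choose k) * p^k = (-1)^k * real (n choose k)"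
    proof -
      have "c k * real (N choose k) * p^k = pochhammer (- real n) k / fact k * (p powi (- int k) * p^k)"
        unfolding c_def using CN by (simp add: field_simps)
      also have "\<dots> = (-1)^k * real (n choose k)" by (simp add: pp pochhammer_neg_nat)
      finally show ?thesis .
    qed
    have fm: "fact m * real ((N-k) choose m) = falling (real N - real k) m"
      using falling_diff_nat[OF k] by simp
    show "a * c k * (real (N choose k) * real ((N-k) choose m) * p^k * (1-p)^m)
        = (p^n * P * (1-p)^m) * ((-1)^k * real (n choose k) * falling (real N - real k) m)"
    proof -
      have "a * c k * (real (N choose k) * real ((N-k) choose m) * p^k * (1-p)^m)
        = (p^n * P * (1-p)^m) * ((c k * real (N choose k) * p^k) * (fact m * real ((N-k) choose m)))"
        unfolding a_def by algebra
      then show ?thesis by (simp only: ck fm)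
    qed
  qed simp
  also have "\<dots> = (p^n * P * (1-p)^m) * (\<Sum>k=0..n. (-1)^k * real (n choose k) * falling (real N - real k) m)"
    by (rule sum_distrib_left[symmetric])
  also have "\<dots> = 0"
    by (simp only: alt_zero[OF assms(1)] mult_zero_right)
  finally show ?thesis .
qed

lemma ip_lin2: "ip N p f (\<lambda>x. \<Sum>j\<in>A. a j * g j x) = (\<Sum>j\<in>A. a j * ip N p f (g j))"
  unfolding ip_def by (simp add: sum_distrib_left sum_distrib_right mult_ac sum.swap[of _ A])

lemma deg_drop: "degree (r::real poly) \<le> Suc d \<Longrightarrow> coeff r (Suc d) = 0 \<Longrightarrow> degree r \<le> d"
proof (rule ccontr)
  assume a: "degree r \<le> Suc d" "coeff r (Suc d) = 0" "\<not> degree r \<le> d"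
  then have dr: "degree r = Suc d" by simp
  have "coeff r (degree r) = 0" unfolding dr by (rule a(2))
  then have "r = 0" by (rule iffD1[OF leading_coeff_0_iff])
  then show False using a by simp
qed

lemma tri:
  fixes B :: "nat \<Rightarrow> real poly"
  assumes B: "\<And>j. j \<le> D \<Longrightarrow> degree (B j) = j \<and> coeff (B j) j \<noteq> 0"
  shows "d \<le> D \<Longrightarrow> degree q \<le> d \<Longrightarrow> \<exists>a. q = (\<Sum>j\<le>d. smult (a j) (B j))"
proof (induction d arbitrary: q)
  case 0
  then obtain c where q: "q = [:c:]" by (auto elim: degree_eq_zeroE)
  have B0: "degree (B 0) = 0" "coeff (B 0) 0 \<noteq> 0" using B[of 0] by auto
  then obtain b where b1: "B 0 = [:b:]" by (auto elim: degree_eq_zeroE)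
  then have b: "B 0 = [:b:]" "b \<noteq> 0" using B0 by auto
  show ?case by (rule exI[of _ "\<lambda>_. c / b"]) (simp add: q b)
next
  case (Suc d)
  have Bs: "degree (B (Suc d)) = Suc d \<and> coeff (B (Suc d)) (Suc d) \<noteq> 0" using B Suc.prems by blast
  define c where "c = coeff q (Suc d) / coeff (B (Suc d)) (Suc d)"
  define r where "r = q - smult c (B (Suc d))"
  have "degree r \<le> Suc d" unfolding r_def
    using Suc.prems Bs by (intro degree_diff_le) (auto intro: order.trans[OF degree_smult_le])
  moreover have "coeff r (Suc d) = 0" unfolding r_def c_def using Bs by simp
  ultimately have "degree r \<le> d" by (rule deg_drop)
  then obtain a where a: "r = (\<Sum>j\<le>d. smult (a j) (B j))" using Suc.IH Suc.prems by auto
  have s1: "(\<Sum>j\<le>d. smult ((a(Suc d := c)) j) (B j)) = (\<Sum>j\<le>d. smult (a j) (B j))"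
    by (rule sum.cong) auto
  have "(\<Sum>j\<le>Suc d. smult ((a(Suc d := c)) j) (B j)) = (\<Sum>j\<le>d. smult (a j) (B j)) + smult c (B (Suc d))"
    by (simp add: s1)
  also have "\<dots> = r + smult c (B (Suc d))" using a by simp
  also have "\<dots> = q" by (simp add: r_def)
  finally have "q = (\<Sum>j\<le>Suc d. smult ((a(Suc d := c)) j) (B j))" by simp
  then show ?case by blast
qed

definition FB :: "nat \<Rightarrow> nat \<Rightarrow> real poly" where "FB N j = LP (\<lambda>i. real N - real i) j"

lemma poly_FB: "poly (FB N j) x = falling (real N - x) j"
  by (simp add: FB_def poly_LP falling_def algebra_simps)

lemma orth_poly:
  assumes "degree q < n" "n \<le> N" "0 < p"
  shows "ip N p (kravchuk N p n) (poly q) = 0"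
proof -
  have "degree q \<le> n - 1" using assms by simp
  then obtain a where a: "q = (\<Sum>j\<le>n-1. smult (a j) (FB N j))"
    using tri[of "n-1" "FB N" "n-1" q] by (auto simp: FB_def LP_deg)
  have "poly q = (\<lambda>x. \<Sum>j\<le>n-1. a j * falling (real N - x) j)"
    by (rule ext) (simp add: a poly_sum poly_FB)
  then have "ip N p (kravchuk N p n) (poly q) = (\<Sum>j\<le>n-1. a j * ip N p (kravchuk N p n) (\<lambda>x. falling (real N - x) j))"
    by (simp add: ip_lin2)
  also have "\<dots> = 0"
    using assms by (intro sum.neutral) (auto intro!: orth_falling)
  finally show ?thesis .
qed



lemma kweight_pos: "x \<le> N \<Longrightarrow> 0 < p \<Longrightarrow> p < 1 \<Longrightarrow> kweight N p x > 0"
  by (simp add: kweight_def)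

lemma knorm2_ip: "knorm2 N p n = ip N p (kravchuk N p n) (kravchuk N p n)"
  by (simp add: knorm2_def ip_def power2_eq_square)

lemma kravchuk_poly: "kravchuk N p n = poly (Kp N p n)"
  by (rule ext) (simp add: poly_Kp)

lemma knorm_pos:
  assumes "k \<le> N" "0 < p" "p < 1"
  shows "knorm2 N p k > 0"
proof (rule ccontr)
  assume "\<not> knorm2 N p k > 0"
  moreover have nn: "\<forall>x\<in>{0..N}. 0 \<le> (kravchuk N p k (real x))^2 * kweight N p x"
    using assms by (auto intro!: mult_nonneg_nonneg less_imp_le[OF kweight_pos])
  moreover have "knorm2 N p k \<ge> 0" unfolding knorm2_def using nn by (intro sum_nonneg) auto
  ultimately have "knorm2 N p k = 0" by linarith
  then have zz: "\<forall>x\<in>{0..N}. (kravchuk N p k (real x))^2 * kweight N p x = 0"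
    using nn unfolding knorm2_def by (subst (asm) sum_nonneg_eq_0_iff) auto
  have z: "\<forall>x\<in>{0..N}. poly (Kp N p k) (real x) = 0"
  proof
    fix x assume x: "x \<in> {0..N}"
    then have "(kravchuk N p k (real x))^2 * kweight N p x = 0" using zz by blast
    moreover have "kweight N p x > 0" using x assms by (intro kweight_pos) auto
    ultimately show "poly (Kp N p k) (real x) = 0" by (simp add: poly_Kp)
  qed
  have dk: "degree (Kp N p k) = k \<and> coeff (Kp N p k) k = 1" using Kp_deg assms by simp
  then have nz: "Kp N p k \<noteq> 0" by auto
  have sub: "real ` {0..N} \<subseteq> {x. poly (Kp N p k) x = 0}" using z by auto
  have "Suc N = card (real ` {0..N})" by (simp add: card_image inj_on_def)
  also have "\<dots> \<le> card {x. poly (Kp N p k) x = 0}"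
    by (rule card_mono[OF poly_roots_finite[OF nz] sub])
  also have "\<dots> \<le> k" using card_poly_roots_bound[OF nz] dk by simp
  finally show False using assms by simp
qed

lemma ip_sym: "ip N p f g = ip N p g f"
  by (simp add: ip_def mult_ac)

lemma ip_lin1: "ip N p (\<lambda>x. \<Sum>j\<in>A. a j * g j x) f = (\<Sum>j\<in>A. a j * ip N p (g j) f)"
  by (subst ip_sym) (simp add: ip_lin2 ip_sym)

lemma ip_diff2: "ip N p f (\<lambda>x. g x - h x) = ip N p f g - ip N p f h"
  by (simp add: ip_def algebra_simps sum_subtractf)

lemma orth_K:
  assumes "i < k" "k \<le> N" "0 < p"
  shows "ip N p (kravchuk N p k) (kravchuk N p i) = 0"
proof -
  have "degree (Kp N p i) < k" using Kp_deg[of i N p] assms by simp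
  then show ?thesis unfolding kravchuk_poly[of N p i] using orth_poly assms by simp
qed

lemma orth_K2:
  assumes "i \<noteq> j" "i \<le> N" "j \<le> N" "0 < p"
  shows "ip N p (kravchuk N p j) (kravchuk N p i) = 0"
proof (cases "i < j")
  case True then show ?thesis using orth_K assms by simp
next
  case False then have "j < i" using assms by simp
  then show ?thesis using orth_K[of j i N p] assms by (simp add: ip_sym)
qed

lemma kravchuk_0: "kravchuk N p 0 x = 1"
  by (simp add: kravchuk_def)

lemma rec3:
  assumes "Suc k \<le> N" "0 < p" "p < 1"
  shows "\<exists>b. \<forall>x. x * kravchuk N p k x = kravchuk N p (Suc k) x + b * kravchuk N p k x
            + (if k = 0 then 0 else knorm2 N p k / knorm2 N p (k-1) * kravchuk N p (k-1) x)"
proof -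
  let ?K = "Kp N p"
  let ?h = "knorm2 N p"
  have p0: "p \<noteq> 0" using assms by simp
  have Kd: "\<And>j. j \<le> N \<Longrightarrow> degree (?K j) = j \<and> coeff (?K j) j = 1" using Kp_deg p0 by blast
  define r where "r = pCons 0 (?K k) - ?K (Suc k)"
  have "degree r \<le> Suc k" unfolding r_def
    using Kd[of k] Kd[of "Suc k"] assms by (intro degree_diff_le) (auto intro: order.trans[OF degree_pCons_le])
  moreover have "coeff r (Suc k) = 0" unfolding r_def using Kd[of k] Kd[of "Suc k"] assms by simp
  ultimately have "degree r \<le> k" by (rule deg_drop)
  then obtain a where a: "r = (\<Sum>j\<le>k. smult (a j) (?K j))"
    using tri[of N ?K k r] Kd assms by auto
  have pr: "poly r x = x * kravchuk N p k x - kravchuk N p (Suc k) x" for x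
    by (simp add: r_def poly_Kp)
  have pa: "poly r x = (\<Sum>j\<le>k. a j * kravchuk N p j x)" for x
    by (simp add: a poly_sum poly_Kp)
  have ipi: "ip N p (poly r) (kravchuk N p i) = a i * ?h i" if "i \<le> k" for i
  proof -
    have "ip N p (poly r) (kravchuk N p i) = (\<Sum>j\<le>k. a j * ip N p (kravchuk N p j) (kravchuk N p i))"
      unfolding pa by (rule ip_lin1)
    also have "\<dots> = (\<Sum>j\<in>{i}. a j * ip N p (kravchuk N p j) (kravchuk N p i))"
      by (rule sum.mono_neutral_right) (use that assms in \<open>auto intro!: orth_K2\<close>)
    finally show ?thesis by (simp add: knorm2_ip)
  qed
  have ipx: "ip N p (poly r) (kravchuk N p i) = ip N p (kravchuk N p k) (poly (pCons 0 (?K i)))" if "i \<le> k" for i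
  proof -
    have pr2: "poly r = (\<lambda>x. x * kravchuk N p k x - kravchuk N p (Suc k) x)" by (rule ext) (simp add: pr)
    have e1: "ip N p (poly r) (kravchuk N p i)
       = ip N p (kravchuk N p i) (\<lambda>x. x * kravchuk N p k x) - ip N p (kravchuk N p i) (kravchuk N p (Suc k))"
      by (subst ip_sym) (simp only: pr2 ip_diff2)
    have e2: "ip N p (kravchuk N p i) (kravchuk N p (Suc k)) = 0"
      using orth_K[of i "Suc k" N p] that assms by (simp add: ip_sym)
    have e3: "ip N p (kravchuk N p i) (\<lambda>x. x * kravchuk N p k x) = ip N p (kravchuk N p k) (poly (pCons 0 (?K i)))"
      by (simp add: ip_def poly_Kp mult_ac)
    show ?thesis using e1 e2 e3 by simp
  qed
  have hpos: "\<And>j. j \<le> N \<Longrightarrow> ?h j > 0" using knorm_pos assms by blast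
  have a0: "a i = 0" if "Suc i < k" for i
  proof -
    have "degree (pCons 0 (?K i)) < k"
      using Kd[of i] that assms by (auto intro: le_less_trans[OF degree_pCons_le])
    then have "ip N p (kravchuk N p k) (poly (pCons 0 (?K i))) = 0"
      using orth_poly assms by simp
    then have "a i * ?h i = 0" using ipi ipx that by simp
    then show ?thesis using hpos[of i] that assms by simp
  qed
  have a1: "a (k-1) = ?h k / ?h (k-1)" if "k \<noteq> 0"
  proof -
    let ?i = "k - 1"
    have pf: "poly (pCons 0 (?K ?i)) = (\<lambda>x. poly (?K k) x - poly (?K k - pCons 0 (?K ?i)) x)"
      by (rule ext) simp
    have "ip N p (kravchuk N p k) (poly (pCons 0 (?K ?i)))
       = ip N p (kravchuk N p k) (\<lambda>x. poly (?K k) x - poly (?K k - pCons 0 (?K ?i)) x)"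
      by (simp only: pf)
    also have "\<dots> = ?h k - ip N p (kravchuk N p k) (poly (?K k - pCons 0 (?K ?i)))"
      by (simp only: ip_diff2 knorm2_ip kravchuk_poly)
    also have "ip N p (kravchuk N p k) (poly (?K k - pCons 0 (?K ?i))) = 0"
    proof -
      have "degree (?K k - pCons 0 (?K ?i)) \<le> k"
        using Kd[of k] Kd[of ?i] that assms by (intro degree_diff_le) (auto intro: order.trans[OF degree_pCons_le])
      moreover have "coeff (?K k - pCons 0 (?K ?i)) k = 0"
        using Kd[of k] Kd[of ?i] that assms by (cases k) auto
      ultimately have "degree (?K k - pCons 0 (?K ?i)) \<le> ?i"
        using deg_drop[of _ ?i] that by (cases k) auto
      then have "degree (?K k - pCons 0 (?K ?i)) < k" using that by simp
      then show ?thesis using orth_poly assms by simp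
    qed
    finally have eq: "ip N p (kravchuk N p k) (poly (pCons 0 (?K ?i))) = ?h k" by linarith
    have le: "?i \<le> k" by simp
    have "a ?i * ?h ?i = ?h k" using ipi[OF le] ipx[OF le] eq by linarith
    moreover have "?h ?i > 0" using hpos[of ?i] assms by simp
    ultimately show ?thesis by (simp add: field_simps)
  qed
  show ?thesis
  proof (rule exI[of _ "a k"], intro allI)
    fix x
    have "x * kravchuk N p k x - kravchuk N p (Suc k) x = (\<Sum>j\<le>k. a j * kravchuk N p j x)"
      using pr pa by simp
    also have "\<dots> = a k * kravchuk N p k x + (if k = 0 then 0 else ?h k / ?h (k-1) * kravchuk N p (k-1) x)"
    proof (cases k)
      case 0 then show ?thesis by simp
    next
      case (Suc k')
      have "(\<Sum>j\<le>k. a j * kravchuk N p j x) = (\<Sum>j<k'. a j * kravchuk N p j x) + a k' * kravchuk N p k' x + a k * kravchuk N p k x"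
        by (simp add: Suc lessThan_Suc_atMost[symmetric])
      moreover have "(\<Sum>j<k'. a j * kravchuk N p j x) = 0" using a0 Suc by (intro sum.neutral) auto
      ultimately show ?thesis using a1 Suc by simp
    qed
    finally show "x * kravchuk N p k x = kravchuk N p (Suc k) x + a k * kravchuk N p k x
            + (if k = 0 then 0 else ?h k / ?h (k-1) * kravchuk N p (k-1) x)" by simp
  qed
qed



lemma CD_alg:
  fixes h0 h1 x y b K0x K0y K1x K1y K2x K2y :: real
  assumes "h0 > 0" "h1 > 0" "x \<noteq> y"
    and "K2x = x*K1x - b*K1x - h1/h0*K0x" "K2y = y*K1y - b*K1y - h1/h0*K0y"
  shows "(K1x*K0y - K0x*K1y)/(h0*(x-y)) + K1x*K1y/h1 = (K2x*K1y - K1x*K2y)/(h1*(x-y))"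
proof -
  have xy: "x - y \<noteq> 0" using assms by simp
  have e: "K2x*K1y - K1x*K2y = (x-y)*K1x*K1y - h1/h0*(K0x*K1y - K1x*K0y)"
    unfolding assms(4) assms(5) by (simp add: algebra_simps)
  have h0: "h0 \<noteq> 0" "h1 \<noteq> 0" using assms by auto
  show ?thesis unfolding e using h0 xy by (simp add: field_simps)
qed

lemma CD:
  assumes "Suc m \<le> N" "0 < p" "p < 1" "x \<noteq> y"
  shows "(\<Sum>k<Suc m. kravchuk N p k x * kravchuk N p k y / knorm2 N p k)
    = (kravchuk N p (Suc m) x * kravchuk N p m y - kravchuk N p m x * kravchuk N p (Suc m) y)
       / (knorm2 N p m * (x - y))"
  using assms(1)
proof (induction m)
  case 0
  obtain b where b: "\<forall>t. t * kravchuk N p 0 t = kravchuk N p (Suc 0) t + b * kravchuk N p 0 t + 0"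
    using rec3[of 0 N p] 0 assms by auto
  have K1: "kravchuk N p (Suc 0) t = t - b" for t using b by (simp add: kravchuk_0 algebra_simps)
  have h: "knorm2 N p 0 > 0" using knorm_pos assms by simp
  show ?case using h assms by (simp add: K1 kravchuk_0 field_simps)
next
  case (Suc m)
  obtain b where b: "\<forall>t. t * kravchuk N p (Suc m) t = kravchuk N p (Suc (Suc m)) t + b * kravchuk N p (Suc m) t
      + knorm2 N p (Suc m) / knorm2 N p m * kravchuk N p m t"
    using rec3[of "Suc m" N p] Suc.prems assms by auto
  have IH: "(\<Sum>k<Suc m. kravchuk N p k x * kravchuk N p k y / knorm2 N p k)
    = (kravchuk N p (Suc m) x * kravchuk N p m y - kravchuk N p m x * kravchuk N p (Suc m) y)
       / (knorm2 N p m * (x - y))" using Suc by simp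
  have "(\<Sum>k<Suc (Suc m). kravchuk N p k x * kravchuk N p k y / knorm2 N p k)
     = (\<Sum>k<Suc m. kravchuk N p k x * kravchuk N p k y / knorm2 N p k)
       + kravchuk N p (Suc m) x * kravchuk N p (Suc m) y / knorm2 N p (Suc m)"
    by simp
  also have "\<dots> = (kravchuk N p (Suc (Suc m)) x * kravchuk N p (Suc m) y - kravchuk N p (Suc m) x * kravchuk N p (Suc (Suc m)) y)
       / (knorm2 N p (Suc m) * (x - y))"
    unfolding IH
  proof (rule CD_alg[where b=b])
    show "knorm2 N p m > 0" "knorm2 N p (Suc m) > 0" using knorm_pos assms Suc.prems by auto
    show "x \<noteq> y" by (rule assms(4))
    show "kravchuk N p (Suc (Suc m)) x = x * kravchuk N p (Suc m) x - b * kravchuk N p (Suc m) x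
       - knorm2 N p (Suc m) / knorm2 N p m * kravchuk N p m x"
      using b[rule_format, of x] by linarith
    show "kravchuk N p (Suc (Suc m)) y = y * kravchuk N p (Suc m) y - b * kravchuk N p (Suc m) y
       - knorm2 N p (Suc m) / knorm2 N p m * kravchuk N p m y"
      using b[rule_format, of y] by linarith
  qed
  finally show ?case .
qed

lemma fdiff_pow_lin2:
  "fdiff_pow j (\<lambda>t. a * f t + b * g t) = (\<lambda>t. a * fdiff_pow j f t + b * fdiff_pow j g t)"
proof (induction j)
  case 0 then show ?case by simp
next
  case (Suc j)
  show ?case by (rule ext) (simp add: fdiff_pow_Suc Suc algebra_simps)
qed

theorem proposition2p2:
  fixes N n j :: nat and p x y :: real
  assumes "N \<ge> 1" and "0 < p" and "p < 1"
    and "1 \<le> n" and "n \<le> N"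
    and "\<forall>i\<le>j. x - y \<noteq> real i"
  shows "kkernel N p n 0 j x y =
           kA N p n j x y * kravchuk N p n x + kB N p n j x y * kravchuk N p (n - 1) x"
proof -
  obtain m where n: "n = Suc m" using assms(4) by (cases n) auto
  let ?K = "kravchuk N p"
  let ?h = "knorm2 N p"
  define \<alpha> where "\<alpha> = ?K n x / ?h m"
  define \<beta> where "\<beta> = - (?K m x / ?h m)"
  define g where "g t = \<alpha> * ?K m t + \<beta> * ?K n t" for t
  have hm: "?h m > 0" using knorm_pos assms n by simp
  have "kkernel N p n 0 j x y = (\<Sum>k<n. (?K k x / ?h k) * fdiff_pow j (?K k) y)"
    unfolding kkernel_def by (simp add: mult_ac)
  also have "\<dots> = fdiff_pow j (\<lambda>t. \<Sum>k<n. (?K k x / ?h k) * ?K k t) y"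
    by (simp only: fdiff_pow_lin)
  also have "\<dots> = fdiff_pow j (\<lambda>t. g t / (x - t)) y"
  proof (rule fdiff_pow_local, intro allI impI)
    fix i assume "i \<le> j"
    then have ne: "x \<noteq> y + real i" using assms(6) by auto
    have "(\<Sum>k<n. (?K k x / ?h k) * ?K k (y + real i)) = (\<Sum>k<n. ?K k x * ?K k (y + real i) / ?h k)"
      by (simp add: mult_ac)
    also have "\<dots> = (?K n x * ?K m (y + real i) - ?K m x * ?K n (y + real i)) / (?h m * (x - (y + real i)))"
      unfolding n by (rule CD) (use assms n ne in auto)
    also have "\<dots> = g (y + real i) / (x - (y + real i))"
      using hm by (simp add: g_def \<alpha>_def \<beta>_def field_simps)
    finally show "(\<Sum>k<n. (?K k x / ?h k) * ?K k (y + real i)) = g (y + real i) / (x - (y + real i))" .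
  qed
  also have "\<dots> = fact j / falling (x-y) (Suc j) * (\<Sum>k\<le>j. fdiff_pow k g y / fact k * falling (x-y) k)"
    by (rule fdiff_pow_quot) (use assms in auto)
  also have "(\<Sum>k\<le>j. fdiff_pow k g y / fact k * falling (x-y) k)
     = \<alpha> * (\<Sum>k\<le>j. fdiff_pow k (?K m) y / fact k * falling (x-y) k)
       + \<beta> * (\<Sum>k\<le>j. fdiff_pow k (?K n) y / fact k * falling (x-y) k)"
  proof -
    have dg: "fdiff_pow k g = (\<lambda>t. \<alpha> * fdiff_pow k (?K m) t + \<beta> * fdiff_pow k (?K n) t)" for k
      unfolding g_def[abs_def] by (rule fdiff_pow_lin2)
    have "(\<Sum>k\<le>j. fdiff_pow k g y / fact k * falling (x-y) k)
       = (\<Sum>k\<le>j. \<alpha> * (fdiff_pow k (?K m) y / fact k * falling (x-y) k)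
                 + \<beta> * (fdiff_pow k (?K n) y / fact k * falling (x-y) k))"
      by (rule sum.cong) (simp_all add: dg field_simps)
    also have "\<dots> = \<alpha> * (\<Sum>k\<le>j. fdiff_pow k (?K m) y / fact k * falling (x-y) k)
       + \<beta> * (\<Sum>k\<le>j. fdiff_pow k (?K n) y / fact k * falling (x-y) k)"
      by (simp only: sum.distrib sum_distrib_left)
    finally show ?thesis .
  qed
  also have "fact j / falling (x-y) (Suc j) * (\<alpha> * (\<Sum>k\<le>j. fdiff_pow k (?K m) y / fact k * falling (x-y) k)
       + \<beta> * (\<Sum>k\<le>j. fdiff_pow k (?K n) y / fact k * falling (x-y) k))
     = kA N p n j x y * ?K n x + kB N p n j x y * ?K (n - 1) x"
      proof -
    have Fnz: "falling (x-y) (Suc j) \<noteq> 0" by (rule falling_nz) (use assms(6) in auto)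
    show ?thesis unfolding kA_def kB_def \<alpha>_def \<beta>_def using hm n Fnz by (simp add: atLeast0AtMost field_simps)
  qed
  finally show ?thesis .
qed


end
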